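(* For $t,\theta\in\mathbb N_0$ with $t\le\theta$, almost surely $\sigma(t;\underline M(t,\theta))\le\theta<\sigma(t;\underline M(t,\theta)-)$.
   Context: $(\Omega,\mathcal F,\mathbb P)$ complete with filtration $\{\mathcal F(t)\}_{t\in\mathbb N_0}$; $\beta\in(0,1)$; $\{h(t)\}_{t\in\mathbb N}$ positive, predictable, with $\mathbb E[\sum_{t\ge0}\beta^th(t+1)]<\infty$. $\mathcal S(t)$: stopping times valued in $\{t,t+1,\dots\}\cup\{\infty\}$; $\beta^\infty:=0$. $V(t;m):=\operatorname{ess\,sup}_{\tau\in\mathcal S(t)}\mathbb E[\sum_{u=t}^{\tau-1}\beta^{u-t}h(u+1)+m\beta^{\tau-t}\mid\mathcal F(t)]$, $m\ge0$ (a.s. continuous in $m$); $\sigma(t;m):=\inf\{\theta\ge t:V(\theta;m)=m\}$, and $\sigma(t;m-):=\lim_{\delta\downarrow0}\sigma(t;m-\delta)$ ($m\mapsto\sigma(t;m)$ is a.s. decreasing, so this limit exists). $M(t):=\operatorname{ess\,sup}\{X>0\ \mathcal F(t)\text{-measurable}:V(t;X)\ge X\}$; $\underline M(t,\theta):=\min_{t\le u\le\theta}M(u)$ (evaluating $\sigma(t;\cdot)$ at this random level pathwise). *)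

theory Defs
  imports "HOL-Probability.Probability"
begin

definition stopping_from :: "'a measure \<Rightarrow> (nat \<Rightarrow> 'a measure) \<Rightarrow> nat \<Rightarrow> ('a \<Rightarrow> enat) \<Rightarrow> bool" where
  "stopping_from M F t \<tau> \<longleftrightarrow>
     (\<forall>\<omega>\<in>space M. enat t \<le> \<tau> \<omega>) \<and> (\<forall>n. {\<omega>\<in>space M. \<tau> \<omega> = enat n} \<in> sets (F n))"

text \<open>The reward sum_{u=t}^{tau-1} beta^(u-t) h(u+1) + m beta^(tau-t), with beta^infinity = 0
  (nonnegative, hence taken in ennreal); the retirement reward m may be random.\<close>
definition payoff :: "real \<Rightarrow> (nat \<Rightarrow> 'a \<Rightarrow> real) \<Rightarrow> nat \<Rightarrow> ('a \<Rightarrow> real) \<Rightarrow> ('a \<Rightarrow> enat) \<Rightarrow> 'a \<Rightarrow> ennreal" where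
  "payoff \<beta> h t m \<tau> \<omega> = (case \<tau> \<omega> of
      enat n \<Rightarrow> (\<Sum>u\<in>{t..<n}. ennreal (\<beta> ^ (u - t) * h (Suc u) \<omega>)) + ennreal (m \<omega> * \<beta> ^ (n - t))
    | \<infinity> \<Rightarrow> (\<Sum>k. ennreal (\<beta> ^ k * h (Suc (t + k)) \<omega>)))"

definition is_ess_sup :: "'a measure \<Rightarrow> 'a measure \<Rightarrow> ('a \<Rightarrow> ennreal) set \<Rightarrow> ('a \<Rightarrow> ennreal) \<Rightarrow> bool" where
  "is_ess_sup M G Xs Y \<longleftrightarrow>
     Y \<in> borel_measurable G \<and>
     (\<forall>X\<in>Xs. AE \<omega> in M. X \<omega> \<le> Y \<omega>) \<and>
     (\<forall>Z\<in>borel_measurable G. (\<forall>X\<in>Xs. AE \<omega> in M. X \<omega> \<le> Z \<omega>) \<longrightarrow> (AE \<omega> in M. Y \<omega> \<le> Z \<omega>))"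

text \<open>The family whose essential supremum is V(t;m) (m possibly an F(t)-measurable random variable).\<close>
definition value_family :: "'a measure \<Rightarrow> (nat \<Rightarrow> 'a measure) \<Rightarrow> real \<Rightarrow> (nat \<Rightarrow> 'a \<Rightarrow> real)
    \<Rightarrow> nat \<Rightarrow> ('a \<Rightarrow> real) \<Rightarrow> ('a \<Rightarrow> ennreal) set" where
  "value_family M F \<beta> h t m =
     {nn_cond_exp M (F t) (payoff \<beta> h t m \<tau>) | \<tau>. stopping_from M F t \<tau>}"

text \<open>The family whose essential supremum is M(t).\<close>
definition index_family :: "'a measure \<Rightarrow> (nat \<Rightarrow> 'a measure) \<Rightarrow> real \<Rightarrow> (nat \<Rightarrow> 'a \<Rightarrow> real)
    \<Rightarrow> nat \<Rightarrow> ('a \<Rightarrow> ennreal) set" where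
  "index_family M F \<beta> h t =
     {(\<lambda>\<omega>. ennreal (X \<omega>)) | X. X \<in> borel_measurable (F t) \<and> (\<forall>\<omega>\<in>space M. 0 < X \<omega>) \<and>
        (\<exists>W. is_ess_sup M (F t) (value_family M F \<beta> h t X) W \<and>
             (AE \<omega> in M. ennreal (X \<omega>) < W \<omega>))}"

text \<open>sigma(t;m) = inf {theta >= t : V(theta;m) = m} (inf of the empty set = infinity).\<close>
definition sigma_hit :: "(nat \<Rightarrow> real \<Rightarrow> 'a \<Rightarrow> real) \<Rightarrow> nat \<Rightarrow> real \<Rightarrow> 'a \<Rightarrow> enat" where
  "sigma_hit V t m \<omega> = Inf {enat \<theta> | \<theta>. t \<le> \<theta> \<and> V \<theta> m \<omega> = m}"

definition sigma_hit_left :: "(nat \<Rightarrow> real \<Rightarrow> 'a \<Rightarrow> real) \<Rightarrow> nat \<Rightarrow> real \<Rightarrow> 'a \<Rightarrow> enat" where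
  "sigma_hit_left V t m \<omega> = Lim (at_right 0) (\<lambda>\<delta>. sigma_hit V t (m - \<delta>) \<omega>)"

definition index_min :: "(nat \<Rightarrow> 'a \<Rightarrow> real) \<Rightarrow> nat \<Rightarrow> nat \<Rightarrow> 'a \<Rightarrow> real" where
  "index_min Mi t \<theta> \<omega> = Min ((\<lambda>u. Mi u \<omega>) ` {t..\<theta>})"

end

theory Submission
  imports Defs
begin


lemma rat_approx_above:
  fixes g :: "real \<Rightarrow> real"
  assumes cont: "continuous_on {0..} g" and x0: "0 \<le> x" and xb: "x < b"
    and P: "\<And>r. r \<in> \<rat> \<Longrightarrow> x < r \<Longrightarrow> r < b \<Longrightarrow> c \<le> g r"
  shows "c \<le> g x"
proof -
  have "\<forall>n. \<exists>r. r \<in> \<rat> \<and> x < r \<and> r < min b (x + inverse (real (Suc n)))"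
    using Rats_dense_in_real xb by (metis min_less_iff_conj less_add_same_cancel1 inverse_positive_iff_positive of_nat_0_less_iff zero_less_Suc)
  then obtain r where r: "\<And>n. r n \<in> \<rat> \<and> x < r n \<and> r n < min b (x + inverse (real (Suc n)))"
    by metis
  have lim: "r \<longlonglongrightarrow> x"
  proof (rule tendsto_sandwich[of "\<lambda>n. x" _ _ "\<lambda>n. x + inverse (real (Suc n))"])
    show "\<forall>\<^sub>F n in sequentially. x \<le> r n" using r by (intro always_eventually allI) (meson less_imp_le)
    show "\<forall>\<^sub>F n in sequentially. r n \<le> x + inverse (real (Suc n))" using r by (intro always_eventually allI) (meson less_imp_le min_less_iff_conj)
    show "(\<lambda>n. x + inverse (real (Suc n))) \<longlonglongrightarrow> x" by (rule LIMSEQ_inverse_real_of_nat_add)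
  qed simp
  have "(\<lambda>n. g (r n)) \<longlonglongrightarrow> g x"
    by (rule continuous_on_tendsto_compose[OF cont lim]) (use x0 r in \<open>auto intro!: always_eventually less_imp_le[OF le_less_trans[OF x0]]\<close>)
  then show ?thesis
    by (rule tendsto_lowerbound) (use r P in auto)
qed

lemma rat_approx_above':
  fixes g :: "real \<Rightarrow> real"
  assumes cont: "continuous_on {0..} g" and x0: "0 \<le> x" and xb: "x < b"
    and P: "\<And>r. r \<in> \<rat> \<Longrightarrow> x < r \<Longrightarrow> r < b \<Longrightarrow> g r \<le> c"
  shows "g x \<le> c"
proof -
  have "-c \<le> - g x"
    by (rule rat_approx_above[of "\<lambda>x. - g x", OF _ x0 xb]) (use cont P in \<open>auto intro: continuous_intros\<close>)
  then show ?thesis by simp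
qed

lemma pathwise_char:
  fixes f :: "real \<Rightarrow> real" and m :: real
  assumes cont: "continuous_on {0..} f" and m0: "0 < m"
    and A: "\<And>q. q \<in> \<rat> \<Longrightarrow> 0 < q \<Longrightarrow> q \<le> f q"
    and B: "\<And>q q'. q \<in> \<rat> \<Longrightarrow> q' \<in> \<rat> \<Longrightarrow> 0 < q \<Longrightarrow> q \<le> q' \<Longrightarrow> f q' \<le> f q + (q' - q)"
    and C: "\<And>q. q \<in> \<rat> \<Longrightarrow> 0 < q \<Longrightarrow> m < q \<Longrightarrow> f q \<le> q"
    and D: "\<And>q. q \<in> \<rat> \<Longrightarrow> 0 < q \<Longrightarrow> q < m \<Longrightarrow> q < f q"
    and x0: "0 \<le> x"
  shows "f x = x \<longleftrightarrow> m \<le> x"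
proof -
  have gc: "continuous_on {0..} (\<lambda>x. f x - x)" by (intro continuous_intros cont)
  show ?thesis
  proof
    assume fx: "f x = x"
    show "m \<le> x"
    proof (rule ccontr)
      assume "\<not> m \<le> x"
      then have "x < m" by simp
      then obtain q where q: "q \<in> \<rat>" "x < q" "q < m" using Rats_dense_in_real by blast
      have q0: "0 < q" using q x0 by simp
      have "f q - q \<le> f x - x"
      proof (rule rat_approx_above[OF gc x0 q(2)])
        fix r assume r: "r \<in> \<rat>" "x < r" "r < q"
        show "f q - q \<le> f r - r" using B[OF r(1) q(1)] r x0 by simp
      qed
      moreover have "q < f q" using D[OF q(1) q0 q(3)] .
      ultimately show False using fx by simp
    qed
  next
    assume mx: "m \<le> x"
    have "f x - x \<le> 0"
      by (rule rat_approx_above'[OF gc x0, of "x+1"]) (use C mx x0 in auto)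
    moreover have "0 \<le> f x - x"
      by (rule rat_approx_above[OF gc x0, of "x+1"]) (use A x0 in \<open>auto simp: algebra_simps\<close>)
    ultimately show "f x = x" by simp
  qed
qed



lemma final_pathwise:
  fixes V :: "nat \<Rightarrow> real \<Rightarrow> 'a \<Rightarrow> real" and Mi :: "nat \<Rightarrow> 'a \<Rightarrow> real"
  assumes char: "\<And>u x. 0 \<le> x \<Longrightarrow> (V u x \<omega> = x \<longleftrightarrow> Mi u \<omega> \<le> x)"
    and pos: "\<And>u. 0 < Mi u \<omega>" and tt: "t \<le> \<theta>"
  shows "sigma_hit V t (index_min Mi t \<theta> \<omega>) \<omega> \<le> enat \<theta> \<and>
           enat \<theta> < sigma_hit_left V t (index_min Mi t \<theta> \<omega>) \<omega>"
proof -
  define m where "m = index_min Mi t \<theta> \<omega>"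
  have fin: "finite ((\<lambda>u. Mi u \<omega>) ` {t..\<theta>})" "(\<lambda>u. Mi u \<omega>) ` {t..\<theta>} \<noteq> {}" using tt by auto
  have "m \<in> (\<lambda>u. Mi u \<omega>) ` {t..\<theta>}" unfolding m_def index_min_def using Min_in[OF fin] .
  then obtain u0 where u0: "u0 \<in> {t..\<theta>}" "Mi u0 \<omega> = m" by auto
  have mle: "\<And>u. u \<in> {t..\<theta>} \<Longrightarrow> m \<le> Mi u \<omega>" unfolding m_def index_min_def using fin by auto
  have m0: "0 < m" using u0 pos by metis
  have sig: "sigma_hit V t x \<omega> = Inf {enat \<theta>' | \<theta>'. t \<le> \<theta>' \<and> Mi \<theta>' \<omega> \<le> x}" if "0 \<le> x" for x
  proof -
    have "{enat \<theta>' | \<theta>'. t \<le> \<theta>' \<and> V \<theta>' x \<omega> = x} = {enat \<theta>' | \<theta>'. t \<le> \<theta>' \<and> Mi \<theta>' \<omega> \<le> x}"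
      using char[OF that] by simp
    then show ?thesis unfolding sigma_hit_def by simp
  qed
  have 1: "sigma_hit V t m \<omega> \<le> enat \<theta>"
  proof -
    have "sigma_hit V t m \<omega> \<le> enat u0" unfolding sig[OF less_imp_le[OF m0]]
      by (rule Inf_lower) (use u0 in auto)
    then show ?thesis using u0 by (simp add: order_trans)
  qed
  have ev_small: "\<forall>\<^sub>F \<delta> in at_right (0::real). \<delta> < b" if "0 < b" for b
    unfolding eventually_at_right_field using that by blast
  define S where "S = {\<theta>'. t \<le> \<theta>' \<and> Mi \<theta>' \<omega> < m}"
  have Sgt: "\<theta> < x" if xS: "x \<in> S" for x
  proof (rule ccontr)
    assume "\<not> \<theta> < x"
    then have "x \<in> {t..\<theta>}" using xS by (auto simp: S_def)
    then show False using mle[of x] xS by (auto simp: S_def)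
  qed
  obtain c where c: "\<forall>\<^sub>F \<delta> in at_right (0::real). sigma_hit V t (m - \<delta>) \<omega> = c" "enat \<theta> < c"
  proof (cases "S = {}")
    case True
    have "\<forall>\<^sub>F \<delta> in at_right (0::real). sigma_hit V t (m - \<delta>) \<omega> = \<infinity>"
      using ev_small[OF m0] eventually_at_right_less[of 0]
    proof eventually_elim
      case (elim \<delta>)
      have E: "{enat \<theta>' | \<theta>'. t \<le> \<theta>' \<and> Mi \<theta>' \<omega> \<le> m - \<delta>} = {}" using True elim unfolding S_def by auto
      have x0: "0 \<le> m - \<delta>" using elim by simp
      show ?case by (subst sig[OF x0], subst E) (simp add: top_enat_def)
    qed
    then show ?thesis using that by simp
  next
    case False
    define s where "s = (LEAST x. x \<in> S)"
    have sS: "s \<in> S" unfolding s_def using False by (metis LeastI ex_in_conv)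
    have sl: "\<And>x. x \<in> S \<Longrightarrow> s \<le> x" unfolding s_def by (rule Least_le)
    have "\<forall>\<^sub>F \<delta> in at_right (0::real). sigma_hit V t (m - \<delta>) \<omega> = enat s"
      using ev_small[of "m - Mi s \<omega>"] sS eventually_at_right_less[of 0] unfolding S_def
    proof -
      have "\<forall>\<^sub>F \<delta> in at_right (0::real). \<delta> < m - Mi s \<omega>" using ev_small[of "m - Mi s \<omega>"] sS unfolding S_def by auto
      then show ?thesis using eventually_at_right_less[of 0]
      proof eventually_elim
        case (elim \<delta>)
        have x0: "0 \<le> m - \<delta>" using elim pos[of s] by simp
        have "Inf {enat \<theta>' | \<theta>'. t \<le> \<theta>' \<and> Mi \<theta>' \<omega> \<le> m - \<delta>} = enat s"
        proof (rule antisym)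
          show "Inf {enat \<theta>' | \<theta>'. t \<le> \<theta>' \<and> Mi \<theta>' \<omega> \<le> m - \<delta>} \<le> enat s"
            by (rule Inf_lower) (use sS elim in \<open>auto simp: S_def\<close>)
          show "enat s \<le> Inf {enat \<theta>' | \<theta>'. t \<le> \<theta>' \<and> Mi \<theta>' \<omega> \<le> m - \<delta>}"
            by (rule Inf_greatest) (use sl elim in \<open>auto simp: S_def\<close>)
        qed
        then show ?case using sig[OF x0] by simp
      qed
    qed
    then show ?thesis using that Sgt[OF sS] by simp
  qed
  have "sigma_hit_left V t m \<omega> = c"
    unfolding sigma_hit_left_def
    by (rule tendsto_Lim[OF trivial_limit_at_right_real tendsto_eventually[OF c(1)]])
  with 1 c(2) show ?thesis unfolding m_def by simp
qed



lemma pathwise_all: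
  fixes V :: "nat \<Rightarrow> real \<Rightarrow> 'a \<Rightarrow> real" and Mi :: "nat \<Rightarrow> 'a \<Rightarrow> real"
  assumes e1: "\<forall>u. \<forall>q\<in>\<rat>. 0 < q \<longrightarrow> q \<le> V u q \<omega>"
    and e2: "\<forall>u. \<forall>q\<in>\<rat>. 0 < q \<longrightarrow> Mi u \<omega> < q \<longrightarrow> V u q \<omega> \<le> q"
    and e3: "\<forall>u. \<forall>q\<in>\<rat>. 0 < q \<longrightarrow> q < Mi u \<omega> \<longrightarrow> q < V u q \<omega>"
    and e4: "\<forall>u. \<forall>q\<in>\<rat>. \<forall>q'\<in>\<rat>. 0 < q \<longrightarrow> q \<le> q' \<longrightarrow> V u q' \<omega> \<le> V u q \<omega> + (q' - q)"
    and e5: "\<forall>u. 0 < Mi u \<omega>"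
    and e6: "\<forall>n. continuous_on {0..} (\<lambda>m. V n m \<omega>)"
    and t_le: "t \<le> \<theta>"
  shows "sigma_hit V t (index_min Mi t \<theta> \<omega>) \<omega> \<le> enat \<theta> \<and>
           enat \<theta> < sigma_hit_left V t (index_min Mi t \<theta> \<omega>) \<omega>"
proof -
  have char: "V u x \<omega> = x \<longleftrightarrow> Mi u \<omega> \<le> x" if x0: "0 \<le> x" for u x
  proof (rule pathwise_char[where f = "\<lambda>m. V u m \<omega>" and m = "Mi u \<omega>" and x = x])
    show "continuous_on {0..} (\<lambda>m. V u m \<omega>)" using e6 by blast
    show "0 < Mi u \<omega>" using e5 by blast
    show "q \<le> V u q \<omega>" if hq: "q \<in> \<rat>" "0 < q" for q
      using e1 hq by blast
    show "V u q' \<omega> \<le> V u q \<omega> + (q' - q)"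
      if hq: "q \<in> \<rat>" "q' \<in> \<rat>" "0 < q" "q \<le> q'" for q q'
      using e4 hq by blast
    show "V u q \<omega> \<le> q" if hq: "q \<in> \<rat>" "0 < q" "Mi u \<omega> < q" for q
      using e2 hq by blast
    show "q < V u q \<omega>" if hq: "q \<in> \<rat>" "0 < q" "q < Mi u \<omega>" for q
      using e3 hq by blast
    show "0 \<le> x" by (rule x0)
  qed
  have pos: "\<And>u. 0 < Mi u \<omega>" using e5 by blast
  show ?thesis by (rule final_pathwise[where V=V and Mi=Mi and \<omega>=\<omega>, OF char pos t_le])
qed



locale gsetup =
  fixes M :: "'a measure" and F :: "nat \<Rightarrow> 'a measure" and \<beta> :: real
    and h :: "nat \<Rightarrow> 'a \<Rightarrow> real"
    and V :: "nat \<Rightarrow> real \<Rightarrow> 'a \<Rightarrow> real" and Mi :: "nat \<Rightarrow> 'a \<Rightarrow> real"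
  assumes prob: "prob_space M"
    and filt_sub: "\<And>n. subalgebra M (F n)"
    and beta: "0 < \<beta>" "\<beta> < 1"
    and h_pos: "\<And>n \<omega>. \<omega> \<in> space M \<Longrightarrow> 0 < h n \<omega>"
    and h_pred: "\<And>n. h (Suc n) \<in> borel_measurable (F n)"
    and V_version: "\<And>n m. 0 \<le> m \<Longrightarrow>
        is_ess_sup M (F n) (value_family M F \<beta> h n (\<lambda>_. m)) (\<lambda>\<omega>. ennreal (V n m \<omega>))"
    and M_version: "\<And>n. is_ess_sup M (F n) (index_family M F \<beta> h n) (\<lambda>\<omega>. ennreal (Mi n \<omega>))"
begin

lemma sfs: "sigma_finite_subalgebra M (F n)"
proof -
  interpret prob_space M by (rule prob)
  have "finite_measure_subalgebra M (F n)"
    by (intro finite_measure_subalgebra.intro finite_measure_axioms finite_measure_subalgebra_axioms.intro filt_sub)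
  then show ?thesis by (rule finite_measure_subalgebra_is_sigma_finite)
qed

lemma h_meas[measurable]: "h (Suc n) \<in> borel_measurable M"
  by (rule measurable_from_subalg[OF filt_sub h_pred])

lemma sub_sets: "A \<in> sets (F n) \<Longrightarrow> A \<in> sets M"
  using filt_sub[of n] unfolding subalgebra_def by auto

lemma space_F[simp]: "space (F n) = space M"
  using filt_sub[of n] unfolding subalgebra_def by auto

lemma stopping_meas:
  assumes "stopping_from M F u \<tau>"
  shows "\<tau> \<in> measurable M (count_space UNIV)"
proof -
  have fin: "{\<omega>\<in>space M. \<tau> \<omega> = enat n} \<in> sets M" for n
    using assms sub_sets unfolding stopping_from_def by blast
  have inf: "{\<omega>\<in>space M. \<tau> \<omega> = \<infinity>} = space M - (\<Union>n. {\<omega>\<in>space M. \<tau> \<omega> = enat n})"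
    using not_infinity_eq by auto
  have "{\<omega>\<in>space M. \<tau> \<omega> = \<infinity>} \<in> sets M" unfolding inf using fin by auto
  then have "\<tau> -` {a} \<inter> space M \<in> sets M" for a
    using fin by (cases a) (auto simp: vimage_def Int_def conj_commute)
  then show ?thesis unfolding measurable_count_space_eq2_countable by auto
qed

lemma payoff_meas:
  assumes "stopping_from M F u \<tau>" and X[measurable]: "X \<in> borel_measurable M"
  shows "payoff \<beta> h u X \<tau> \<in> borel_measurable M"
proof -
  let ?f = "\<lambda>i \<omega>. (case i of
      enat n \<Rightarrow> (\<Sum>v\<in>{u..<n}. ennreal (\<beta> ^ (v - u) * h (Suc v) \<omega>)) + ennreal (X \<omega> * \<beta> ^ (n - u))
    | \<infinity> \<Rightarrow> (\<Sum>k. ennreal (\<beta> ^ k * h (Suc (u + k)) \<omega>)))"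
  have "(\<lambda>\<omega>. ?f (\<tau> \<omega>) \<omega>) \<in> borel_measurable M"
  proof (rule measurable_compose_countable[OF _ stopping_meas[OF assms(1)]])
    fix i show "?f i \<in> borel_measurable M" by (cases i) simp_all
  qed
  then show ?thesis unfolding payoff_def[abs_def] .
qed

lemma ess_sup_le:
  assumes "is_ess_sup M G Fam W" "Z \<in> borel_measurable G" "\<And>Y. Y \<in> Fam \<Longrightarrow> AE \<omega> in M. Y \<omega> \<le> Z \<omega>"
  shows "AE \<omega> in M. W \<omega> \<le> Z \<omega>"
  using assms unfolding is_ess_sup_def by blast

lemma ess_sup_ub:
  assumes "is_ess_sup M G Fam W" "Y \<in> Fam"
  shows "AE \<omega> in M. Y \<omega> \<le> W \<omega>"
  using assms unfolding is_ess_sup_def by blast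

lemma ess_sup_meas:
  assumes "is_ess_sup M G Fam W"
  shows "W \<in> borel_measurable G"
  using assms unfolding is_ess_sup_def by blast

lemma ennreal_cmp_aux:
  fixes X q b :: real
  assumes "0 \<le> q" "0 \<le> b" "b \<le> 1"
  shows "ennreal (X * b) \<le> ennreal (q * b) + ennreal (X - q)"
proof (cases "X \<le> q")
  case True
  then have "ennreal (X * b) \<le> ennreal (q * b)" using assms by (intro ennreal_leI mult_right_mono) auto
  then show ?thesis by (intro add_increasing2) auto
next
  case False
  have eq: "ennreal (q * b) + ennreal (X - q) = ennreal (q * b + (X - q))"
    using False assms by (intro ennreal_plus[symmetric]) auto
  have "(X - q) * b \<le> X - q" using False assms by (intro mult_left_le) auto
  then have "X * b \<le> q * b + (X - q)" by (simp add: algebra_simps)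
  then show ?thesis unfolding eq by (rule ennreal_leI)
qed

lemma payoff_cmp:
  assumes "0 \<le> q"
  shows "payoff \<beta> h u X \<tau> \<omega> \<le> payoff \<beta> h u (\<lambda>_. q) \<tau> \<omega> + ennreal (X \<omega> - q)"
proof (cases "\<tau> \<omega>")
  case (enat n)
  have b: "0 \<le> \<beta> ^ (n - u)" "\<beta> ^ (n - u) \<le> 1" using beta by (auto intro: power_le_one)
  note aux = add_left_mono[OF ennreal_cmp_aux[OF assms b, of "X \<omega>"],
      of "\<Sum>v\<in>{u..<n}. ennreal (\<beta> ^ (v - u) * h (Suc v) \<omega>)"]
  show ?thesis unfolding payoff_def enat enat.case
    using aux by (simp only: add.assoc)
next
  case infinity
  show ?thesis unfolding payoff_def infinity enat.case by (intro add_increasing2) auto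
qed

lemma key_cmp:
  assumes X: "X \<in> borel_measurable (F u)" and q: "0 \<le> q"
    and W: "is_ess_sup M (F u) (value_family M F \<beta> h u X) W"
  shows "AE \<omega> in M. W \<omega> \<le> ennreal (V u q \<omega>) + ennreal (X \<omega> - q)"
proof -
  interpret sigma_finite_subalgebra M "F u" by (rule sfs)
  have XM[measurable]: "X \<in> borel_measurable M" by (rule measurable_from_subalg[OF filt_sub X])
  have X'[measurable]: "X \<in> borel_measurable (F u)" by (rule X)
  have Vm: "(\<lambda>\<omega>. ennreal (V u q \<omega>)) \<in> borel_measurable (F u)"
    by (rule ess_sup_meas[OF V_version[OF q]])
  have Dm[measurable]: "(\<lambda>\<omega>. ennreal (X \<omega> - q)) \<in> borel_measurable (F u)" by measurable
  have DmM[measurable]: "(\<lambda>\<omega>. ennreal (X \<omega> - q)) \<in> borel_measurable M" by measurable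
  show ?thesis
  proof (rule ess_sup_le[OF W])
    show "(\<lambda>\<omega>. ennreal (V u q \<omega>) + ennreal (X \<omega> - q)) \<in> borel_measurable (F u)"
      by (rule borel_measurable_add[OF Vm Dm])
  next
    fix Y assume "Y \<in> value_family M F \<beta> h u X"
    then obtain \<tau> where Y: "Y = nn_cond_exp M (F u) (payoff \<beta> h u X \<tau>)" and st: "stopping_from M F u \<tau>"
      unfolding value_family_def by blast
    have p1: "payoff \<beta> h u X \<tau> \<in> borel_measurable M" by (rule payoff_meas[OF st XM])
    have p2: "payoff \<beta> h u (\<lambda>_. q) \<tau> \<in> borel_measurable M" by (rule payoff_meas[OF st]) simp
    have sm: "(\<lambda>\<omega>. payoff \<beta> h u (\<lambda>_. q) \<tau> \<omega> + ennreal (X \<omega> - q)) \<in> borel_measurable M"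
      by (rule borel_measurable_add[OF p2 DmM])
    have pw: "AE \<omega> in M. payoff \<beta> h u X \<tau> \<omega> \<le> payoff \<beta> h u (\<lambda>_. q) \<tau> \<omega> + ennreal (X \<omega> - q)"
      by (rule AE_I2) (rule payoff_cmp[OF q])
    have e1: "AE \<omega> in M. nn_cond_exp M (F u) (payoff \<beta> h u X \<tau>) \<omega> \<le>
        nn_cond_exp M (F u) (\<lambda>\<omega>. payoff \<beta> h u (\<lambda>_. q) \<tau> \<omega> + ennreal (X \<omega> - q)) \<omega>"
      by (rule nn_cond_exp_mono[OF pw p1 sm])
    have e2: "AE \<omega> in M. nn_cond_exp M (F u) (payoff \<beta> h u (\<lambda>_. q) \<tau>) \<omega> + nn_cond_exp M (F u) (\<lambda>\<omega>. ennreal (X \<omega> - q)) \<omega>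
        = nn_cond_exp M (F u) (\<lambda>\<omega>. payoff \<beta> h u (\<lambda>_. q) \<tau> \<omega> + ennreal (X \<omega> - q)) \<omega>"
      by (rule nn_cond_exp_sum[OF p2 DmM])
    have e3: "AE \<omega> in M. ennreal (X \<omega> - q) = nn_cond_exp M (F u) (\<lambda>\<omega>. ennreal (X \<omega> - q)) \<omega>"
      by (rule nn_cond_exp_F_meas[OF Dm])
    have mem: "nn_cond_exp M (F u) (payoff \<beta> h u (\<lambda>_. q) \<tau>) \<in> value_family M F \<beta> h u (\<lambda>_. q)"
      unfolding value_family_def using st by blast
    have e4: "AE \<omega> in M. nn_cond_exp M (F u) (payoff \<beta> h u (\<lambda>_. q) \<tau>) \<omega> \<le> ennreal (V u q \<omega>)"
      by (rule ess_sup_ub[OF V_version[OF q] mem])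
    show "AE \<omega> in M. Y \<omega> \<le> ennreal (V u q \<omega>) + ennreal (X \<omega> - q)"
      using e1 e2 e3 e4 unfolding Y
    proof eventually_elim
      case (elim \<omega>)
      note e1 = elim(1) and e2 = elim(2) and e3 = elim(3) and e4 = elim(4)
      from e1 have "nn_cond_exp M (F u) (payoff \<beta> h u X \<tau>) \<omega> \<le>
          nn_cond_exp M (F u) (payoff \<beta> h u (\<lambda>_. q) \<tau>) \<omega> + nn_cond_exp M (F u) (\<lambda>\<omega>. ennreal (X \<omega> - q)) \<omega>"
        by (simp only: e2)
      also have "\<dots> = nn_cond_exp M (F u) (payoff \<beta> h u (\<lambda>_. q) \<tau>) \<omega> + ennreal (X \<omega> - q)"
        by (simp only: e3)
      also have "\<dots> \<le> ennreal (V u q \<omega>) + ennreal (X \<omega> - q)"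
        by (rule add_right_mono[OF e4])
      finally show ?case .
    qed
  qed
qed

lemma const_stopping: "u \<le> k \<Longrightarrow> stopping_from M F u (\<lambda>_. enat k)"
  unfolding stopping_from_def
proof safe
  fix n assume "u \<le> k"
  show "{\<omega> \<in> space M. enat k = enat n} \<in> sets (F n)"
  proof (cases "k = n")
    case True
    then have "{\<omega> \<in> space M. enat k = enat n} = space (F n)" by simp
    then show ?thesis by (metis sets.top)
  qed simp
qed simp

lemma V_meas[measurable]: "0 \<le> q \<Longrightarrow> (\<lambda>\<omega>. ennreal (V u q \<omega>)) \<in> borel_measurable (F u)"
  by (rule ess_sup_meas[OF V_version])

lemma Mi_meas[measurable]: "(\<lambda>\<omega>. ennreal (Mi u \<omega>)) \<in> borel_measurable (F u)"
  by (rule ess_sup_meas[OF M_version])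

lemma V_ge_q:
  assumes q: "0 < q"
  shows "AE \<omega> in M. q \<le> V u q \<omega>"
proof -
  interpret sigma_finite_subalgebra M "F u" by (rule sfs)
  have pe: "payoff \<beta> h u (\<lambda>_. q) (\<lambda>_. enat u) = (\<lambda>\<omega>. ennreal q)"
    by (simp add: payoff_def fun_eq_iff)
  have e1: "AE \<omega> in M. ennreal q = nn_cond_exp M (F u) (\<lambda>\<omega>. ennreal q) \<omega>"
    by (rule nn_cond_exp_F_meas) simp
  have e2: "AE \<omega> in M. nn_cond_exp M (F u) (payoff \<beta> h u (\<lambda>_. q) (\<lambda>_. enat u)) \<omega> \<le> ennreal (V u q \<omega>)"
    by (rule ess_sup_ub[OF V_version]) (use q const_stopping[of u u] in \<open>auto simp: value_family_def\<close>)
  show ?thesis using e1 e2 unfolding pe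
  proof eventually_elim
    case (elim \<omega>)
    then have "ennreal q \<le> ennreal (V u q \<omega>)" by simp
    then show ?case using q by (auto simp: ennreal_le_iff2)
  qed
qed

lemma V_ge_h:
  assumes q: "0 \<le> q"
  shows "AE \<omega> in M. h (Suc u) \<omega> + \<beta> * q \<le> V u q \<omega>"
proof -
  interpret sigma_finite_subalgebra M "F u" by (rule sfs)
  have hu[measurable]: "h (Suc u) \<in> borel_measurable (F u)" by (rule h_pred)
  have pe: "payoff \<beta> h u (\<lambda>_. q) (\<lambda>_. enat (Suc u)) = (\<lambda>\<omega>. ennreal (h (Suc u) \<omega>) + ennreal (q * \<beta>))"
    by (simp add: payoff_def fun_eq_iff)
  have e1: "AE \<omega> in M. ennreal (h (Suc u) \<omega>) + ennreal (q * \<beta>) = nn_cond_exp M (F u) (\<lambda>\<omega>. ennreal (h (Suc u) \<omega>) + ennreal (q * \<beta>)) \<omega>"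
    by (rule nn_cond_exp_F_meas) measurable
  have e2: "AE \<omega> in M. nn_cond_exp M (F u) (payoff \<beta> h u (\<lambda>_. q) (\<lambda>_. enat (Suc u))) \<omega> \<le> ennreal (V u q \<omega>)"
    by (rule ess_sup_ub[OF V_version]) (use q const_stopping[of u "Suc u"] in \<open>auto simp: value_family_def\<close>)
  show ?thesis using e1 e2 AE_space unfolding pe
  proof eventually_elim
    case (elim \<omega>)
    have hp: "0 < h (Suc u) \<omega>" using h_pos elim by blast
    have qb: "0 \<le> q * \<beta>" using q beta by simp
    from elim have "ennreal (h (Suc u) \<omega> + q * \<beta>) \<le> ennreal (V u q \<omega>)" using hp qb by simp
    then show ?case using hp qb by (auto simp: ennreal_le_iff2 mult.commute)
  qed
qed

lemma V_lip:
  assumes q: "0 < q" "q \<le> q'"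
  shows "AE \<omega> in M. V u q' \<omega> \<le> V u q \<omega> + (q' - q)"
proof -
  have e1: "AE \<omega> in M. ennreal (V u q' \<omega>) \<le> ennreal (V u q \<omega>) + ennreal (q' - q)"
    using key_cmp[of "\<lambda>_. q'" u q, OF _ _ V_version] q by simp
  show ?thesis using e1 V_ge_q[OF q(1), of u]
  proof eventually_elim
    case (elim \<omega>)
    have "ennreal (V u q \<omega>) + ennreal (q' - q) = ennreal (V u q \<omega> + (q' - q))"
      using elim q by (intro ennreal_plus[symmetric]) auto
    then have le: "ennreal (V u q' \<omega>) \<le> ennreal (V u q \<omega> + (q' - q))" using elim by simp
    have B0: "0 \<le> V u q \<omega> + (q' - q)" using elim q by simp
    show ?case using le by (simp only: ennreal_le_iff[OF B0])
  qed
qed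

lemma V_gt_below:
  assumes q: "0 < q"
  shows "AE \<omega> in M. q < Mi u \<omega> \<longrightarrow> q < V u q \<omega>"
proof -
  define Z where "Z = (\<lambda>\<omega>. if ennreal (V u q \<omega>) \<le> ennreal q then ennreal q else ennreal (Mi u \<omega>))"
  have Zm: "Z \<in> borel_measurable (F u)"
  proof -
    define fV where "fV = (\<lambda>\<omega>. ennreal (V u q \<omega>))"
    define fM where "fM = (\<lambda>\<omega>. ennreal (Mi u \<omega>))"
    have [measurable]: "fV \<in> borel_measurable (F u)" "fM \<in> borel_measurable (F u)"
      unfolding fV_def fM_def using q by (auto intro: V_meas Mi_meas)
    have "Z = (\<lambda>\<omega>. if fV \<omega> \<le> ennreal q then ennreal q else fM \<omega>)" unfolding Z_def fV_def fM_def ..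
    also have "\<dots> \<in> borel_measurable (F u)" by measurable
    finally show ?thesis .
  qed
  have "AE \<omega> in M. ennreal (Mi u \<omega>) \<le> Z \<omega>"
  proof (rule ess_sup_le[OF M_version Zm])
    fix Y assume "Y \<in> index_family M F \<beta> h u"
    then obtain X W where Y: "Y = (\<lambda>\<omega>. ennreal (X \<omega>))" and X: "X \<in> borel_measurable (F u)"
      and W: "is_ess_sup M (F u) (value_family M F \<beta> h u X) W" and XW: "AE \<omega> in M. ennreal (X \<omega>) < W \<omega>"
      unfolding index_family_def by blast
    have e1: "AE \<omega> in M. W \<omega> \<le> ennreal (V u q \<omega>) + ennreal (X \<omega> - q)"
      using key_cmp[OF X _ W, of q] q by simp
    have e2: "AE \<omega> in M. Y \<omega> \<le> ennreal (Mi u \<omega>)"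
      by (rule ess_sup_ub[OF M_version]) fact
    show "AE \<omega> in M. Y \<omega> \<le> Z \<omega>" using e1 e2 XW unfolding Y
    proof eventually_elim
      case (elim \<omega>)
      show ?case
      proof (cases "ennreal (V u q \<omega>) \<le> ennreal q")
        case True
        have "X \<omega> \<le> q"
        proof (rule ccontr)
          assume "\<not> X \<omega> \<le> q"
          then have "ennreal q + ennreal (X \<omega> - q) = ennreal (X \<omega>)" using q by (simp flip: ennreal_plus)
          moreover have "W \<omega> \<le> ennreal q + ennreal (X \<omega> - q)" using elim(1) True by (meson add_right_mono order_trans)
          ultimately show False using elim(3) by simp
        qed
        then show ?thesis using True unfolding Z_def by (simp add: ennreal_leI)
      next
        case False
        then show ?thesis using elim(2) unfolding Z_def by simp
      qed
    qed
  qed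
  then show ?thesis
  proof eventually_elim
    case (elim \<omega>)
    show ?case
    proof
      assume qm: "q < Mi u \<omega>"
      show "q < V u q \<omega>"
      proof (rule ccontr)
        assume "\<not> q < V u q \<omega>"
        then have "ennreal (V u q \<omega>) \<le> ennreal q" by (simp add: ennreal_leI)
        then have "ennreal (Mi u \<omega>) \<le> ennreal q" using elim unfolding Z_def by simp
        then show False using qm q by simp
      qed
    qed
  qed
qed

lemma payoff_pt: "m \<omega> = m' \<omega> \<Longrightarrow> payoff \<beta> h t m \<tau> \<omega> = payoff \<beta> h t m' \<tau> \<omega>"
  by (simp add: payoff_def split: enat.split)

lemma nce_local:
  assumes P[measurable]: "Measurable.pred (F u) P"
    and f[measurable]: "f \<in> borel_measurable M" and g[measurable]: "g \<in> borel_measurable M"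
    and eq: "\<And>\<omega>. \<omega> \<in> space M \<Longrightarrow> P \<omega> \<Longrightarrow> f \<omega> = g \<omega>"
  shows "AE \<omega> in M. P \<omega> \<longrightarrow> nn_cond_exp M (F u) f \<omega> = nn_cond_exp M (F u) g \<omega>"
proof -
  interpret sigma_finite_subalgebra M "F u" by (rule sfs)
  have PM[measurable]: "Measurable.pred M P" by (rule measurable_from_subalg[OF filt_sub P])
  define I where "I = (\<lambda>\<omega>. if P \<omega> then 1 else (0::ennreal))"
  have [measurable]: "I \<in> borel_measurable (F u)" unfolding I_def by measurable
  have [measurable]: "I \<in> borel_measurable M" by (rule measurable_from_subalg[OF filt_sub]) measurable
  have e1: "AE \<omega> in M. I \<omega> * nn_cond_exp M (F u) f \<omega> = nn_cond_exp M (F u) (\<lambda>\<omega>. I \<omega> * f \<omega>) \<omega>"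
    by (rule nn_cond_exp_prod) measurable
  have e2: "AE \<omega> in M. I \<omega> * nn_cond_exp M (F u) g \<omega> = nn_cond_exp M (F u) (\<lambda>\<omega>. I \<omega> * g \<omega>) \<omega>"
    by (rule nn_cond_exp_prod) measurable
  have e3: "AE \<omega> in M. nn_cond_exp M (F u) (\<lambda>\<omega>. I \<omega> * f \<omega>) \<omega> = nn_cond_exp M (F u) (\<lambda>\<omega>. I \<omega> * g \<omega>) \<omega>"
    by (rule nn_cond_exp_cong) (auto intro!: AE_I2 simp: I_def eq)
  show ?thesis using e1 e2 e3
  proof eventually_elim
    case (elim \<omega>)
    show ?case
    proof
      assume "P \<omega>"
      then show "nn_cond_exp M (F u) f \<omega> = nn_cond_exp M (F u) g \<omega>" using elim by (simp add: I_def)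
    qed
  qed
qed

lemma partition_index:
  fixes c :: "nat \<Rightarrow> real"
  assumes cpos: "\<And>k. 0 < c k" and cover: "AE \<omega> in M. \<exists>k. c k < V u (c k) \<omega>"
  shows "AE \<omega> in M. \<forall>k. (c k < V u (c k) \<omega> \<and> (\<forall>j<k. \<not> c j < V u (c j) \<omega>)) \<longrightarrow> c k \<le> Mi u \<omega>"
proof -
  interpret sigma_finite_subalgebra M "F u" by (rule sfs)
  define fV where "fV k = (\<lambda>\<omega>. ennreal (V u (c k) \<omega>))" for k
  have fVm[measurable]: "fV k \<in> borel_measurable (F u)" for k
    unfolding fV_def using cpos[of k] by (intro V_meas) simp
  define Ex where "Ex \<omega> = (\<exists>k. ennreal (c k) < fV k \<omega>)" for \<omega>
  define K where "K \<omega> = (LEAST k. ennreal (c k) < fV k \<omega>)" for \<omega>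
  have Exm[measurable]: "Measurable.pred (F u) Ex" unfolding Ex_def by measurable
  have Km[measurable]: "K \<in> measurable (F u) (count_space UNIV)" unfolding K_def by measurable
  define X where "X \<omega> = (if Ex \<omega> then c (K \<omega>) else 1)" for \<omega>
  define W where "W \<omega> = (if Ex \<omega> then fV (K \<omega>) \<omega> else 0)" for \<omega>
  have cK[measurable]: "(\<lambda>\<omega>. c (K \<omega>)) \<in> borel_measurable (F u)"
    by (rule measurable_compose[OF Km]) simp
  have Xm[measurable]: "X \<in> borel_measurable (F u)" unfolding X_def by measurable
  have XM[measurable]: "X \<in> borel_measurable M" by (rule measurable_from_subalg[OF filt_sub Xm])
  have fVK[measurable]: "(\<lambda>\<omega>. fV (K \<omega>) \<omega>) \<in> borel_measurable (F u)"
    by (rule measurable_compose_countable[OF fVm Km])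
  have Wm[measurable]: "W \<in> borel_measurable (F u)" unfolding W_def by measurable
  have AEEx: "AE \<omega> in M. Ex \<omega>" using cover
  proof eventually_elim
    case (elim \<omega>)
    then obtain k where "c k < V u (c k) \<omega>" by blast
    then have "ennreal (c k) < fV k \<omega>" unfolding fV_def using cpos[of k] by (intro ennreal_lessI) auto
    then show ?case unfolding Ex_def by blast
  qed
  have predk[measurable]: "Measurable.pred (F u) (\<lambda>\<omega>. Ex \<omega> \<and> K \<omega> = k)" for k by measurable
  have loc: "AE \<omega> in M. (Ex \<omega> \<and> K \<omega> = k) \<longrightarrow>
      nn_cond_exp M (F u) (payoff \<beta> h u X \<tau>) \<omega> = nn_cond_exp M (F u) (payoff \<beta> h u (\<lambda>_. c k) \<tau>) \<omega>"
    if st: "stopping_from M F u \<tau>" for k \<tau>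
    by (rule nce_local[OF predk payoff_meas[OF st XM] payoff_meas[OF st]]) (auto intro!: payoff_pt simp: X_def)
  have ess: "is_ess_sup M (F u) (value_family M F \<beta> h u X) W"
    unfolding is_ess_sup_def
  proof (intro conjI ballI allI impI)
    show "W \<in> borel_measurable (F u)" by (rule Wm)
  next
    fix Y assume "Y \<in> value_family M F \<beta> h u X"
    then obtain \<tau> where Y: "Y = nn_cond_exp M (F u) (payoff \<beta> h u X \<tau>)" and st: "stopping_from M F u \<tau>"
      unfolding value_family_def by blast
    have ub: "AE \<omega> in M. nn_cond_exp M (F u) (payoff \<beta> h u (\<lambda>_. c k) \<tau>) \<omega> \<le> fV k \<omega>" for k
      unfolding fV_def using cpos[of k] st
      by (intro ess_sup_ub[OF V_version]) (auto simp: value_family_def)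
    have "AE \<omega> in M. \<forall>k. (Ex \<omega> \<and> K \<omega> = k) \<longrightarrow>
      nn_cond_exp M (F u) (payoff \<beta> h u X \<tau>) \<omega> = nn_cond_exp M (F u) (payoff \<beta> h u (\<lambda>_. c k) \<tau>) \<omega>"
      using loc[OF st] by (intro AE_all_countable[THEN iffD2]) blast
    moreover have "AE \<omega> in M. \<forall>k. nn_cond_exp M (F u) (payoff \<beta> h u (\<lambda>_. c k) \<tau>) \<omega> \<le> fV k \<omega>"
      using ub by (intro AE_all_countable[THEN iffD2]) blast
    ultimately show "AE \<omega> in M. Y \<omega> \<le> W \<omega>" using AEEx unfolding Y
    proof eventually_elim
      case (elim \<omega>)
      have "nn_cond_exp M (F u) (payoff \<beta> h u X \<tau>) \<omega> = nn_cond_exp M (F u) (payoff \<beta> h u (\<lambda>_. c (K \<omega>)) \<tau>) \<omega>"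
        using elim(1) elim(3) by blast
      also have "\<dots> \<le> fV (K \<omega>) \<omega>" using elim(2) by blast
      also have "\<dots> = W \<omega>" using elim(3) unfolding W_def by simp
      finally show ?case .
    qed
  next
    fix Z assume Zm[measurable]: "Z \<in> borel_measurable (F u)"
      and Zub: "\<forall>Y\<in>value_family M F \<beta> h u X. AE \<omega> in M. Y \<omega> \<le> Z \<omega>"
    have "AE \<omega> in M. fV k \<omega> \<le> (if Ex \<omega> \<and> K \<omega> = k then Z \<omega> else \<infinity>)" for k
      unfolding fV_def
    proof (rule ess_sup_le[OF V_version])
      show "0 \<le> c k" using cpos[of k] by simp
      show "(\<lambda>\<omega>. if Ex \<omega> \<and> K \<omega> = k then Z \<omega> else \<infinity>) \<in> borel_measurable (F u)" by measurable
    next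
      fix Y assume "Y \<in> value_family M F \<beta> h u (\<lambda>_. c k)"
      then obtain \<tau> where Y: "Y = nn_cond_exp M (F u) (payoff \<beta> h u (\<lambda>_. c k) \<tau>)" and st: "stopping_from M F u \<tau>"
        unfolding value_family_def by blast
      have "AE \<omega> in M. nn_cond_exp M (F u) (payoff \<beta> h u X \<tau>) \<omega> \<le> Z \<omega>"
        using Zub st unfolding value_family_def by blast
      with loc[OF st, of k] show "AE \<omega> in M. Y \<omega> \<le> (if Ex \<omega> \<and> K \<omega> = k then Z \<omega> else \<infinity>)"
        unfolding Y by eventually_elim auto
    qed
    then have "AE \<omega> in M. \<forall>k. fV k \<omega> \<le> (if Ex \<omega> \<and> K \<omega> = k then Z \<omega> else \<infinity>)"
      by (intro AE_all_countable[THEN iffD2]) blast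
    then show "AE \<omega> in M. W \<omega> \<le> Z \<omega>" using AEEx
    proof eventually_elim
      case (elim \<omega>)
      have "fV (K \<omega>) \<omega> \<le> (if Ex \<omega> \<and> K \<omega> = K \<omega> then Z \<omega> else \<infinity>)" using elim(1) by blast
      then show ?case using elim(2) unfolding W_def by simp
    qed
  qed
  have XW: "AE \<omega> in M. ennreal (X \<omega>) < W \<omega>" using AEEx
  proof eventually_elim
    case (elim \<omega>)
    have "ennreal (c (K \<omega>)) < fV (K \<omega>) \<omega>" unfolding K_def using elim unfolding Ex_def by (rule LeastI_ex)
    then show ?case using elim unfolding X_def W_def by simp
  qed
  have Xpos: "\<forall>\<omega>\<in>space M. 0 < X \<omega>" unfolding X_def using cpos by simp
  have "(\<lambda>\<omega>. ennreal (X \<omega>)) \<in> index_family M F \<beta> h u"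
    unfolding index_family_def using Xm Xpos ess XW by blast
  then have XM: "AE \<omega> in M. ennreal (X \<omega>) \<le> ennreal (Mi u \<omega>)"
    by (rule ess_sup_ub[OF M_version])
  then show ?thesis
  proof eventually_elim
    case (elim \<omega>)
    show ?case
    proof (intro allI impI)
      fix k assume k: "c k < V u (c k) \<omega> \<and> (\<forall>j<k. \<not> c j < V u (c j) \<omega>)"
      have ek: "ennreal (c k) < fV k \<omega>" unfolding fV_def using cpos[of k] k by (intro ennreal_lessI) auto
      have Exw: "Ex \<omega>" unfolding Ex_def using ek by blast
      have "K \<omega> = k" unfolding K_def
      proof (rule Least_equality)
        show "ennreal (c k) < fV k \<omega>" by (rule ek)
      next
        fix j assume ej: "ennreal (c j) < fV j \<omega>"
        show "k \<le> j"
        proof (rule ccontr)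
          assume "\<not> k \<le> j"
          then have "\<not> c j < V u (c j) \<omega>" using k by simp
          then have "fV j \<omega> \<le> ennreal (c j)" unfolding fV_def by (simp add: ennreal_leI)
          then show False using ej by simp
        qed
      qed
      then have "ennreal (c k) \<le> ennreal (Mi u \<omega>)" using elim Exw unfolding X_def by simp
      then show "c k \<le> Mi u \<omega>" using cpos[of k] by (auto simp: ennreal_le_iff2)
    qed
  qed
qed

lemma C_and_E:
  assumes q: "0 < q"
  shows "AE \<omega> in M. (Mi u \<omega> < q \<longrightarrow> V u q \<omega> \<le> q) \<and> 0 < Mi u \<omega>"
proof -
  define c where "c k = (if k = 0 then q else inverse (real k))" for k
  have cpos: "0 < c k" for k using q by (simp add: c_def)
  have "AE \<omega> in M. \<forall>k. h (Suc u) \<omega> + \<beta> * c k \<le> V u (c k) \<omega>"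
    using V_ge_h cpos by (intro AE_all_countable[THEN iffD2]) (blast intro: less_imp_le)
  then have cover: "AE \<omega> in M. \<exists>k. c k < V u (c k) \<omega>" using AE_space
  proof eventually_elim
    case (elim \<omega>)
    have hp: "0 < h (Suc u) \<omega>" using h_pos elim(2) by blast
    obtain n where n: "inverse (real (Suc n)) < h (Suc u) \<omega>" using reals_Archimedean[OF hp] by blast
    have "0 < \<beta> * c (Suc n)" using beta cpos[of "Suc n"] by simp
    then have "c (Suc n) < h (Suc u) \<omega> + \<beta> * c (Suc n)" using n unfolding c_def by simp
    also have "\<dots> \<le> V u (c (Suc n)) \<omega>" using elim(1) by blast
    finally show ?case by blast
  qed
  have P: "AE \<omega> in M. \<forall>k. (c k < V u (c k) \<omega> \<and> (\<forall>j<k. \<not> c j < V u (c j) \<omega>)) \<longrightarrow> c k \<le> Mi u \<omega>"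
    by (rule partition_index[OF cpos cover])
  show ?thesis using P cover
  proof eventually_elim
    case (elim \<omega>)
    have 1: "Mi u \<omega> < q \<longrightarrow> V u q \<omega> \<le> q"
    proof
      assume "Mi u \<omega> < q"
      then show "V u q \<omega> \<le> q" using elim(1)[rule_format, of 0] by (force simp: c_def)
    qed
    define k where "k = (LEAST k. c k < V u (c k) \<omega>)"
    have k1: "c k < V u (c k) \<omega>" unfolding k_def using elim(2) by (rule LeastI_ex)
    have k2: "\<forall>j<k. \<not> c j < V u (c j) \<omega>" unfolding k_def using not_less_Least by blast
    have "c k \<le> Mi u \<omega>" using elim(1) k1 k2 by blast
    then have "0 < Mi u \<omega>" using cpos[of k] by linarith
    with 1 show ?case by blast
  qed
qed

end

theorem proposition3p4:
  fixes M :: "'a measure" and F :: "nat \<Rightarrow> 'a measure" and \<beta> :: real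
    and h :: "nat \<Rightarrow> 'a \<Rightarrow> real"
    and V :: "nat \<Rightarrow> real \<Rightarrow> 'a \<Rightarrow> real" and Mi :: "nat \<Rightarrow> 'a \<Rightarrow> real"
    and t \<theta> :: nat
  assumes prob: "prob_space M"
    and complete: "complete_measure M"
    and filt_sub: "\<And>n. subalgebra M (F n)"
    and filt_mono: "\<And>n k. n \<le> k \<Longrightarrow> sets (F n) \<subseteq> sets (F k)"
    and beta: "0 < \<beta>" "\<beta> < 1"
    and h_pos: "\<And>n \<omega>. \<omega> \<in> space M \<Longrightarrow> 0 < h n \<omega>"
    and h_pred: "\<And>n. h (Suc n) \<in> borel_measurable (F n)"
    and h_int: "(\<integral>\<^sup>+ \<omega>. (\<Sum>k. ennreal (\<beta> ^ k * h (Suc k) \<omega>)) \<partial>M) < \<infinity>"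
    and V_version: "\<And>n m. 0 \<le> m \<Longrightarrow>
        is_ess_sup M (F n) (value_family M F \<beta> h n (\<lambda>_. m)) (\<lambda>\<omega>. ennreal (V n m \<omega>))"
    and V_cont: "AE \<omega> in M. \<forall>n. continuous_on {0..} (\<lambda>m. V n m \<omega>)"
    and M_version: "\<And>n. is_ess_sup M (F n) (index_family M F \<beta> h n) (\<lambda>\<omega>. ennreal (Mi n \<omega>))"
    and t_le: "t \<le> \<theta>"
  shows "AE \<omega> in M.
           sigma_hit V t (index_min Mi t \<theta> \<omega>) \<omega> \<le> enat \<theta> \<and>
           enat \<theta> < sigma_hit_left V t (index_min Mi t \<theta> \<omega>) \<omega>"
  proof -
  interpret gsetup M F \<beta> h V Mi
    by (rule gsetup.intro[OF prob filt_sub beta h_pos h_pred V_version M_version])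
  have AEq: "AE \<omega> in M. \<forall>u. \<forall>q\<in>\<rat>. P u q \<omega>" if "\<And>u q. q \<in> \<rat> \<Longrightarrow> AE \<omega> in M. P u q \<omega>" for P :: "nat \<Rightarrow> real \<Rightarrow> 'a \<Rightarrow> bool"
  proof -
    have "AE \<omega> in M. \<forall>q\<in>\<rat>. P u q \<omega>" for u
      by (rule AE_ball_countable[OF countable_rat, THEN iffD2]) (use that in blast)
    then show ?thesis using AE_all_countable[where P="\<lambda>u \<omega>. \<forall>q\<in>\<rat>. P u q \<omega>" and M=M] by blast
  qed
  have a1: "AE \<omega> in M. \<forall>u. \<forall>q\<in>\<rat>. 0 < q \<longrightarrow> q \<le> V u q \<omega>"
  proof (rule AEq)
    fix u :: nat and q :: real show "AE \<omega> in M. 0 < q \<longrightarrow> q \<le> V u q \<omega>"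
    proof (cases "0 < q")
      case True then show ?thesis using V_ge_q[of q u] by (simp add: eventually_mono)
    qed simp
  qed
  have a2: "AE \<omega> in M. \<forall>u. \<forall>q\<in>\<rat>. 0 < q \<longrightarrow> Mi u \<omega> < q \<longrightarrow> V u q \<omega> \<le> q"
  proof (rule AEq)
    fix u :: nat and q :: real show "AE \<omega> in M. 0 < q \<longrightarrow> Mi u \<omega> < q \<longrightarrow> V u q \<omega> \<le> q"
    proof (cases "0 < q")
      case True then show ?thesis using C_and_E[of q u] by (rule_tac eventually_mono) auto
    qed simp
  qed
  have a3: "AE \<omega> in M. \<forall>u. \<forall>q\<in>\<rat>. 0 < q \<longrightarrow> q < Mi u \<omega> \<longrightarrow> q < V u q \<omega>"
  proof (rule AEq)
    fix u :: nat and q :: real show "AE \<omega> in M. 0 < q \<longrightarrow> q < Mi u \<omega> \<longrightarrow> q < V u q \<omega>"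
    proof (cases "0 < q")
      case True then show ?thesis using V_gt_below[of q u] by simp
    qed simp
  qed
  have a4: "AE \<omega> in M. \<forall>u. \<forall>q\<in>\<rat>. \<forall>q'\<in>\<rat>. 0 < q \<longrightarrow> q \<le> q' \<longrightarrow> V u q' \<omega> \<le> V u q \<omega> + (q' - q)"
  proof (rule AEq)
    fix u :: nat and q :: real assume "q \<in> \<rat>"
    show "AE \<omega> in M. \<forall>q'\<in>\<rat>. 0 < q \<longrightarrow> q \<le> q' \<longrightarrow> V u q' \<omega> \<le> V u q \<omega> + (q' - q)"
    proof (intro AE_ball_countable[OF countable_rat, THEN iffD2] ballI)
      fix q' :: real show "AE \<omega> in M. 0 < q \<longrightarrow> q \<le> q' \<longrightarrow> V u q' \<omega> \<le> V u q \<omega> + (q' - q)"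
      proof (cases "0 < q \<and> q \<le> q'")
        case True then show ?thesis using V_lip[of q q' u] by (simp add: eventually_mono)
      qed auto
    qed
  qed
  have a5: "AE \<omega> in M. \<forall>u. 0 < Mi u \<omega>"
  proof (intro AE_all_countable[THEN iffD2] allI)
    fix u show "AE \<omega> in M. 0 < Mi u \<omega>" using C_and_E[of 1 u] by (rule_tac eventually_mono) auto
  qed
  show ?thesis using a1 a2 a3 a4 a5 V_cont
  proof eventually_elim
    case (elim \<omega>)
    show ?case by (rule pathwise_all[where V=V and Mi=Mi and \<omega>=\<omega>, OF elim t_le])
  qed
qed

end
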